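(* (i) If $G_n\to G$ in $\hat{\mathcal G}_*[\bar{\mathcal Z},\mathcal Z]$, then $[G_n]\to[G]$ in $\mathcal G_*[\bar{\mathcal Z},\mathcal Z]$. (ii) If $[G_n]\to[G]$ in $\mathcal G_*[\bar{\mathcal Z},\mathcal Z]$ and $G\in\hat{\mathcal G}_*[\bar{\mathcal Z},\mathcal Z]$ is a connected representative of $[G]$, then there exist connected representatives $G_n\in\hat{\mathcal G}_*[\bar{\mathcal Z},\mathcal Z]$ of $[G_n]$, $n\in\mathbb N$, such that $G_n\to G$ in $\hat{\mathcal G}_*[\bar{\mathcal Z},\mathcal Z]$. In other words, the set-valued map $[H]\mapsto\{H'\in\hat{\mathcal G}_*[\bar{\mathcal Z},\mathcal Z]:H'\text{ is a connected representative of }[H]\}$ is lower semicontinuous.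
   Context: Let $\bar{\mathcal Z},\mathcal Z$ be Polish spaces. $\hat{\mathcal G}_*[\bar{\mathcal Z},\mathcal Z]$ is the set of all rooted, simple, locally finite (not necessarily connected) graphs $G=(V,E,o,\bar\vartheta,\vartheta)$ with vertex set $V\subseteq\mathbb N$, root $o\in V$, edge marks $\bar\vartheta\in\bar{\mathcal Z}^E$ and vertex marks $\vartheta\in\mathcal Z^V$. For subsets $S_n,S\subseteq\mathbb N$ (or of the set of pairs of naturals), $S_n\to S$ means $S=\bigcup_n\bigcap_{n'>n}S_{n'}=\bigcap_n\bigcup_{n'>n}S_{n'}$. For $v\in V$, $\mathrm{cl}_v(G)$ is $v$ together with its neighbours in $G$. Convergence in $\hat{\mathcal G}_*$: $G_n=(V_n,E_n,o_n,\bar\vartheta^n,\vartheta^n)\to G=(V,E,o,\bar\vartheta,\vartheta)$ iff (1) $V_n\to V$; (2) $E_n\to E$; (3) $o_n\to o$; (4) for every $e\in E$, $\bar\vartheta^n_e\to\bar\vartheta_e$ along those $n$ with $e\in E_n$; (5) for every $v\in V$, $\vartheta^n_v\to\vartheta_v$ along those $n$ with $v\in V_n$; (6) for every $v\in V$, $\max\mathrm{cl}_v(G_n)\to\max\mathrm{cl}_v(G)$ along those $n$ with $v\in V_n$. Isomorphism classes: two rooted marked graphs are isomorphic if there is a bijection of vertex sets preserving adjacency, root and all marks. $[G]$ denotes the isomorphism class of the connected component of the root of $G$ (with its marks); a representative of a class is a connected rooted marked graph in it. $\mathcal G_*[\bar{\mathcal Z},\mathcal Z]$ is the space of such classes with the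 local topology: $[G_n]\to[G]$ iff for every $m\in\mathbb N$ there is $n_m$ and, for $n>n_m$, rooted graph isomorphisms $\varphi_{n,m}$ from the unmarked ball $B_m(G)$ (vertices within graph distance $m$ of the root) onto $B_m(G_n)$ with $\vartheta^n_{\varphi_{n,m}(v)}\to\vartheta_v$ and $\bar\vartheta^n_{\varphi_{n,m}(e)}\to\bar\vartheta_e$ for all vertices $v$ and edges $e$ of $B_m(G)$. *)

theory Defs
  imports "HOL-Analysis.Analysis"
begin

text \<open>Edges are stored as ordered pairs of a symmetric irreflexive relation; the
  undirected edge {u,v} corresponds to both (u,v) and (v,u), and its mark is
  required to be the same on both orientations.  Marks outside V resp. E are
  irrelevant junk.\<close>

record ('e, 'v) mgraph =
  verts :: "nat set"
  edges :: "(nat \<times> nat) set"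
  root  :: nat
  emark :: "nat \<times> nat \<Rightarrow> 'e"
  vmark :: "nat \<Rightarrow> 'v"

definition wf_graph :: "('e, 'v) mgraph \<Rightarrow> bool" where
  "wf_graph G \<longleftrightarrow>
     root G \<in> verts G \<and>
     edges G \<subseteq> verts G \<times> verts G \<and>
     (\<forall>u v. (u, v) \<in> edges G \<longrightarrow> (v, u) \<in> edges G) \<and>
     (\<forall>v. (v, v) \<notin> edges G) \<and>
     (\<forall>v \<in> verts G. finite {u. (v, u) \<in> edges G}) \<and>
     (\<forall>u v. (u, v) \<in> edges G \<longrightarrow> emark G (u, v) = emark G (v, u))"

definition set_conv :: "(nat \<Rightarrow> 'a set) \<Rightarrow> 'a set \<Rightarrow> bool" where
  "set_conv S L \<longleftrightarrow>
     L = (\<Union>n. \<Inter>n'\<in>{n<..}. S n') \<and> L = (\<Inter>n. \<Union>n'\<in>{n<..}. S n')"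

definition cl :: "('e, 'v) mgraph \<Rightarrow> nat \<Rightarrow> nat set" where
  "cl G v = insert v {u. (v, u) \<in> edges G}"

definition hat_conv :: "(nat \<Rightarrow> ('e::topological_space, 'v::topological_space) mgraph)
                          \<Rightarrow> ('e, 'v) mgraph \<Rightarrow> bool" where
  "hat_conv Gs G \<longleftrightarrow>
     set_conv (\<lambda>n. verts (Gs n)) (verts G) \<and>
     set_conv (\<lambda>n. edges (Gs n)) (edges G) \<and>
     (\<lambda>n. root (Gs n)) \<longlonglongrightarrow> root G \<and>
     (\<forall>e \<in> edges G. ((\<lambda>n. emark (Gs n) e) \<longlongrightarrow> emark G e)
                        (inf sequentially (principal {n. e \<in> edges (Gs n)}))) \<and>
     (\<forall>v \<in> verts G. ((\<lambda>n. vmark (Gs n) v) \<longlongrightarrow> vmark G v)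
                        (inf sequentially (principal {n. v \<in> verts (Gs n)}))) \<and>
     (\<forall>v \<in> verts G. ((\<lambda>n. Max (cl (Gs n) v)) \<longlongrightarrow> Max (cl G v))
                        (inf sequentially (principal {n. v \<in> verts (Gs n)})))"

fun ballV :: "('e, 'v) mgraph \<Rightarrow> nat \<Rightarrow> nat set" where
  "ballV G 0 = {root G}"
| "ballV G (Suc m) = ballV G m \<union> {v. \<exists>u \<in> ballV G m. (u, v) \<in> edges G}"

definition compV :: "('e, 'v) mgraph \<Rightarrow> nat set" where
  "compV G = (\<Union>m. ballV G m)"

definition root_comp :: "('e, 'v) mgraph \<Rightarrow> ('e, 'v) mgraph" where
  "root_comp G = G\<lparr>verts := compV G, edges := edges G \<inter> (compV G \<times> compV G)\<rparr>"

definition connected_graph :: "('e, 'v) mgraph \<Rightarrow> bool" where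
  "connected_graph G \<longleftrightarrow> verts G = compV G"

definition mg_iso :: "('e, 'v) mgraph \<Rightarrow> ('e, 'v) mgraph \<Rightarrow> bool" where
  "mg_iso G H \<longleftrightarrow> (\<exists>\<phi>. bij_betw \<phi> (verts G) (verts H) \<and>
     \<phi> (root G) = root H \<and>
     (\<forall>u \<in> verts G. \<forall>v \<in> verts G. (u, v) \<in> edges G \<longleftrightarrow> (\<phi> u, \<phi> v) \<in> edges H) \<and>
     (\<forall>v \<in> verts G. vmark H (\<phi> v) = vmark G v) \<and>
     (\<forall>u v. (u, v) \<in> edges G \<longrightarrow> emark H (\<phi> u, \<phi> v) = emark G (u, v)))"

definition ball_iso :: "nat \<Rightarrow> (nat \<Rightarrow> nat) \<Rightarrow> ('e, 'v) mgraph \<Rightarrow> ('e, 'v) mgraph \<Rightarrow> bool" where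
  "ball_iso m \<phi> G H \<longleftrightarrow> bij_betw \<phi> (ballV G m) (ballV H m) \<and>
     \<phi> (root G) = root H \<and>
     (\<forall>u \<in> ballV G m. \<forall>v \<in> ballV G m. (u, v) \<in> edges G \<longleftrightarrow> (\<phi> u, \<phi> v) \<in> edges H)"

text \<open>Local convergence [G_n] \<rightarrow> [G] in \<open>\<G>_*\<close>, expressed on representatives.\<close>
definition local_conv :: "(nat \<Rightarrow> ('e::topological_space, 'v::topological_space) mgraph)
                            \<Rightarrow> ('e, 'v) mgraph \<Rightarrow> bool" where
  "local_conv Gs G \<longleftrightarrow>
     (\<forall>m. \<exists>N \<phi>. (\<forall>n > N. ball_iso m (\<phi> n) G (Gs n)) \<and>
        (\<forall>v \<in> ballV G m. (\<lambda>n. vmark (Gs n) (\<phi> n v)) \<longlonglongrightarrow> vmark G v) \<and>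
        (\<forall>u \<in> ballV G m. \<forall>v \<in> ballV G m. (u, v) \<in> edges G \<longrightarrow>
            (\<lambda>n. emark (Gs n) (\<phi> n u, \<phi> n v)) \<longlonglongrightarrow> emark G (u, v)))"

end

theory Submission
  imports Defs "HOL-Library.Infinite_Set"
begin

lemma nat_tendsto_ev: "(f \<longlongrightarrow> (l::nat)) F \<Longrightarrow> eventually (\<lambda>x. f x = l) F"
  using topological_tendstoD[of f l F "{l}"] open_discrete by auto

lemma set_convI:
  assumes "\<And>x. eventually (\<lambda>n. x \<in> S n \<longleftrightarrow> x \<in> L) sequentially"
  shows "set_conv S L"
  unfolding set_conv_def
proof (intro conjI)
  show "L = (\<Union>n. \<Inter>n'\<in>{n<..}. S n')"
  proof (intro equalityI subsetI)
    fix x assume "x \<in> L"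
    with assms[of x] obtain N where N: "\<forall>n\<ge>N. x \<in> S n" unfolding eventually_sequentially by blast
    have "x \<in> (\<Inter>n'\<in>{N<..}. S n')" using N by auto
    then show "x \<in> (\<Union>n. \<Inter>n'\<in>{n<..}. S n')" by blast
  next
    fix x assume "x \<in> (\<Union>n. \<Inter>n'\<in>{n<..}. S n')"
    then obtain n where n: "\<forall>n'>n. x \<in> S n'" by auto
    from assms[of x] obtain N where N: "\<forall>n\<ge>N. x \<in> S n \<longleftrightarrow> x \<in> L" unfolding eventually_sequentially by blast
    have "x \<in> S (max N (Suc n))" using n by simp
    then show "x \<in> L" using N by simp
  qed
  show "L = (\<Inter>n. \<Union>n'\<in>{n<..}. S n')"
  proof (intro equalityI subsetI)
    fix x assume "x \<in> L"
    with assms[of x] obtain N where N: "\<forall>n\<ge>N. x \<in> S n" unfolding eventually_sequentially by blast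
    show "x \<in> (\<Inter>n. \<Union>n'\<in>{n<..}. S n')"
    proof
      fix n 
      have "x \<in> S (max N (Suc n))" using N by simp
      moreover have "max N (Suc n) \<in> {n<..}" by simp
      ultimately show "x \<in> (\<Union>n'\<in>{n<..}. S n')" by blast
    qed
  next
    fix x assume x: "x \<in> (\<Inter>n. \<Union>n'\<in>{n<..}. S n')"
    from assms[of x] obtain N where N: "\<forall>n\<ge>N. x \<in> S n \<longleftrightarrow> x \<in> L" unfolding eventually_sequentially by blast
    from x have "x \<in> (\<Union>n'\<in>{N<..}. S n')" by blast
    then obtain n' where "n' > N" "x \<in> S n'" by auto
    with N show "x \<in> L" by auto
  qed
qed

lemma set_convD:
  assumes "set_conv S L"
  shows "eventually (\<lambda>n. x \<in> S n \<longleftrightarrow> x \<in> L) sequentially"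
proof (cases "x \<in> L")
  case True
  with assms have "x \<in> (\<Union>n. \<Inter>n'\<in>{n<..}. S n')" unfolding set_conv_def by blast
  then obtain N where "\<forall>n'>N. x \<in> S n'" by blast
  then have "\<forall>n\<ge>Suc N. x \<in> S n" by auto
  with True show ?thesis unfolding eventually_sequentially by blast
next
  case False
  with assms have "x \<notin> (\<Inter>n. \<Union>n'\<in>{n<..}. S n')" unfolding set_conv_def by blast
  then obtain N where "\<forall>n'>N. x \<notin> S n'" by blast
  then have "\<forall>n\<ge>Suc N. x \<notin> S n" by auto
  with False show ?thesis unfolding eventually_sequentially by blast
qed

lemma tendsto_inf_principal_seq:
  assumes "(f \<longlongrightarrow> l) (inf sequentially (principal S))" "eventually (\<lambda>n. n \<in> S) sequentially"
  shows "(f \<longlongrightarrow> l) sequentially"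
proof (rule topological_tendstoI)
  fix U assume "open U" "l \<in> U"
  with assms(1) have "eventually (\<lambda>n. f n \<in> U) (inf sequentially (principal S))"
    using topological_tendstoD by blast
  then have "eventually (\<lambda>n. n \<in> S \<longrightarrow> f n \<in> U) sequentially"
    by (simp only: eventually_inf_principal)
  with assms(2) show "eventually (\<lambda>n. f n \<in> U) sequentially" by eventually_elim auto
qed

lemma ballV_mono: "k \<le> m \<Longrightarrow> ballV G k \<subseteq> ballV G m"
  by (induction m) (auto simp: le_Suc_eq)

lemma ballV_sub_verts: "wf_graph G \<Longrightarrow> ballV G m \<subseteq> verts G"
  by (induction m) (auto simp: wf_graph_def)

lemma ballV_finite: "wf_graph G \<Longrightarrow> finite (ballV G m)"
proof (induction m)
  case 0 then show ?case by simp
next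
  case (Suc m)
  have "{v. \<exists>u \<in> ballV G m. (u, v) \<in> edges G} = (\<Union>u\<in>ballV G m. {v. (u, v) \<in> edges G})" by auto
  moreover have "finite (\<Union>u\<in>ballV G m. {v. (u, v) \<in> edges G})"
  proof (rule finite_UN_I)
    show "finite (ballV G m)" using Suc by simp
    fix u assume "u \<in> ballV G m"
    then have "u \<in> verts G" using ballV_sub_verts[OF Suc.prems] by blast
    then show "finite {v. (u, v) \<in> edges G}" using Suc.prems unfolding wf_graph_def by blast
  qed
  ultimately show ?case using Suc by simp
qed

lemma ballV_compV: "ballV G m \<subseteq> compV G"
  unfolding compV_def by auto

lemma ballV_root_comp: "ballV (root_comp G) m = ballV G m"
proof (induction m)
  case 0 then show ?case by (simp add: root_comp_def)
next
  case (Suc m)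
  have "\<And>u v. u \<in> ballV G m \<Longrightarrow> (u, v) \<in> edges G \<Longrightarrow> v \<in> compV G \<and> u \<in> compV G"
    using ballV_compV[of G m] ballV_compV[of G "Suc m"] by auto
  then show ?case using Suc by (auto simp: root_comp_def)
qed

lemma compV_root_comp: "compV (root_comp G) = compV G"
  unfolding compV_def by (simp add: ballV_root_comp)

lemma connected_root_comp: "connected_graph (root_comp G)"
  unfolding connected_graph_def by (simp add: compV_root_comp) (simp add: root_comp_def)

lemma compV_sub: "wf_graph G \<Longrightarrow> compV G \<subseteq> verts G"
  unfolding compV_def using ballV_sub_verts by blast

lemma wf_root_comp: "wf_graph G \<Longrightarrow> wf_graph (root_comp G)"
proof -
  assume w: "wf_graph G"
  have r: "root G \<in> compV G" using ballV_compV[of G 0] by auto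
  have f: "\<forall>v \<in> compV G. finite {u. (v, u) \<in> edges G \<inter> compV G \<times> compV G}"
  proof
    fix v assume "v \<in> compV G"
    then have "v \<in> verts G" using compV_sub[OF w] by blast
    then have "finite {u. (v, u) \<in> edges G}" using w unfolding wf_graph_def by blast
    then show "finite {u. (v, u) \<in> edges G \<inter> compV G \<times> compV G}" by (rule finite_subset[rotated]) auto
  qed
  show ?thesis using w r f unfolding wf_graph_def root_comp_def by auto
qed

lemma root_comp_edges_ball:
  "u \<in> ballV G m \<Longrightarrow> v \<in> ballV G m \<Longrightarrow> (u, v) \<in> edges (root_comp G) \<longleftrightarrow> (u, v) \<in> edges G"
  using ballV_compV[of G m] by (auto simp: root_comp_def)

lemma root_comp_simps[simp]: "root (root_comp G) = root G" "vmark (root_comp G) = vmark G"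
  "emark (root_comp G) = emark G" "verts (root_comp G) = compV G"
  by (auto simp: root_comp_def)

lemma cl_finite: "wf_graph G \<Longrightarrow> u \<in> verts G \<Longrightarrow> finite (cl G u)"
  unfolding cl_def wf_graph_def by auto

lemma le_Max_cl: "wf_graph G \<Longrightarrow> u \<in> verts G \<Longrightarrow> (u, w) \<in> edges G \<Longrightarrow> w \<le> Max (cl G u)"
  using cl_finite[of G u] by (intro Max_ge) (auto simp: cl_def)

lemma nbr_ev:
  fixes Gs :: "nat \<Rightarrow> ('e::topological_space, 'v::topological_space) mgraph"
  assumes wfs: "\<forall>n. wf_graph (Gs n)" and wf: "wf_graph G" and hc: "hat_conv Gs G" and u: "u \<in> verts G"
  shows "eventually (\<lambda>n. \<forall>w. (u, w) \<in> edges (Gs n) \<longleftrightarrow> (u, w) \<in> edges G) sequentially"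
proof -
  define M where "M = Max (cl G u)"
  have e1: "eventually (\<lambda>n. u \<in> verts (Gs n)) sequentially"
    using set_convD[of "\<lambda>n. verts (Gs n)" "verts G" u] hc u unfolding hat_conv_def
    by (auto elim: eventually_mono)
  have "((\<lambda>n. Max (cl (Gs n) u)) \<longlongrightarrow> M) (inf sequentially (principal {n. u \<in> verts (Gs n)}))"
    using hc u unfolding hat_conv_def M_def by blast
  then have "eventually (\<lambda>n. Max (cl (Gs n) u) = M) (inf sequentially (principal {n. u \<in> verts (Gs n)}))"
    by (rule nat_tendsto_ev)
  then have e2: "eventually (\<lambda>n. u \<in> verts (Gs n) \<longrightarrow> Max (cl (Gs n) u) = M) sequentially"
    by (simp add: eventually_inf_principal)
  have e3: "eventually (\<lambda>n. \<forall>w\<in>{..M}. (u, w) \<in> edges (Gs n) \<longleftrightarrow> (u, w) \<in> edges G) sequentially"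
    using hc unfolding hat_conv_def
    by (intro eventually_ball_finite) (auto intro: set_convD)
  show ?thesis
    using e1 e2 e3
  proof eventually_elim
    case (elim n)
    show ?case
    proof
      fix w
      show "(u, w) \<in> edges (Gs n) \<longleftrightarrow> (u, w) \<in> edges G"
      proof (cases "w \<le> M")
        case True then show ?thesis using elim by auto
      next
        case False
        then have "(u, w) \<notin> edges G" using le_Max_cl[OF wf u, of w] M_def by auto
        moreover have "(u, w) \<notin> edges (Gs n)" using le_Max_cl[OF wfs[rule_format, of n], of u w] elim False by auto
        ultimately show ?thesis by simp
      qed
    qed
  qed
qed

lemma ball_ev:
  fixes Gs :: "nat \<Rightarrow> ('e::topological_space, 'v::topological_space) mgraph"
  assumes wfs: "\<forall>n. wf_graph (Gs n)" and wf: "wf_graph G" and hc: "hat_conv Gs G"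
  shows "eventually (\<lambda>n. ballV (Gs n) m = ballV G m \<and>
     (\<forall>u\<in>ballV G m. \<forall>w. (u, w) \<in> edges (Gs n) \<longleftrightarrow> (u, w) \<in> edges G)) sequentially"
proof (induction m)
  case 0
  have "eventually (\<lambda>n. root (Gs n) = root G) sequentially"
    using hc unfolding hat_conv_def by (intro nat_tendsto_ev) blast
  moreover have "eventually (\<lambda>n. \<forall>w. (root G, w) \<in> edges (Gs n) \<longleftrightarrow> (root G, w) \<in> edges G) sequentially"
    using wf by (intro nbr_ev[OF wfs wf hc]) (simp add: wf_graph_def)
  ultimately show ?case by eventually_elim simp
next
  case (Suc m)
  have "eventually (\<lambda>n. \<forall>u\<in>ballV G (Suc m). \<forall>w. (u, w) \<in> edges (Gs n) \<longleftrightarrow> (u, w) \<in> edges G) sequentially"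
  proof (intro eventually_ball_finite[OF ballV_finite[OF wf]] ballI)
    fix u assume "u \<in> ballV G (Suc m)"
    then have "u \<in> verts G" using ballV_sub_verts[OF wf, of "Suc m"] by blast
    then show "eventually (\<lambda>n. \<forall>w. (u, w) \<in> edges (Gs n) \<longleftrightarrow> (u, w) \<in> edges G) sequentially"
      by (rule nbr_ev[OF wfs wf hc])
  qed
  with Suc.IH show ?case
  proof eventually_elim
    case (elim n)
    then have "ballV (Gs n) (Suc m) = ballV G (Suc m)" by auto
    with elim show ?case by blast
  qed
qed

lemma part1:
  fixes Gs :: "nat \<Rightarrow> ('e::topological_space, 'v::topological_space) mgraph"
  assumes wfs: "\<forall>n. wf_graph (Gs n)" and wf: "wf_graph G" and hc: "hat_conv Gs G"
  shows "local_conv (\<lambda>n. root_comp (Gs n)) (root_comp G)"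
  unfolding local_conv_def
proof
  fix m
  have "eventually (\<lambda>n. root (Gs n) = root G) sequentially"
    using hc unfolding hat_conv_def by (intro nat_tendsto_ev) blast
  with ball_ev[OF wfs wf hc, of m] obtain N where N: "\<And>n. n \<ge> N \<Longrightarrow> ballV (Gs n) m = ballV G m \<and>
     (\<forall>u\<in>ballV G m. \<forall>w. (u, w) \<in> edges (Gs n) \<longleftrightarrow> (u, w) \<in> edges G) \<and> root (Gs n) = root G"
    unfolding eventually_sequentially by (metis (no_types, lifting) eventually_conj eventually_sequentially)
  have iso: "\<forall>n>N. ball_iso m id (root_comp G) (root_comp (Gs n))"
  proof (intro allI impI)
    fix n assume "n > N"
    then have Nn: "ballV (Gs n) m = ballV G m"
      "\<forall>u\<in>ballV G m. \<forall>w. (u, w) \<in> edges (Gs n) \<longleftrightarrow> (u, w) \<in> edges G" "root (Gs n) = root G"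
      using N[of n] by auto
    show "ball_iso m id (root_comp G) (root_comp (Gs n))"
      unfolding ball_iso_def ballV_root_comp
    proof (intro conjI ballI)
      show "bij_betw id (ballV G m) (ballV (Gs n) m)" using Nn by simp
      show "id (root (root_comp G)) = root (root_comp (Gs n))" using Nn by simp
      fix u v assume uv: "u \<in> ballV G m" "v \<in> ballV G m"
      then show "((u, v) \<in> edges (root_comp G)) = ((id u, id v) \<in> edges (root_comp (Gs n)))"
        using root_comp_edges_ball[of u G m v] root_comp_edges_ball[of u "Gs n" m v] Nn by auto
    qed
  qed
  have vm: "\<forall>v\<in>ballV (root_comp G) m. (\<lambda>n. vmark (root_comp (Gs n)) (id v)) \<longlonglongrightarrow> vmark (root_comp G) v"
  proof
    fix v assume "v \<in> ballV (root_comp G) m"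
    then have v: "v \<in> verts G" using ballV_sub_verts[OF wf] by (auto simp: ballV_root_comp)
    have "eventually (\<lambda>n. n \<in> {n. v \<in> verts (Gs n)}) sequentially"
      using set_convD[of "\<lambda>n. verts (Gs n)" "verts G" v] hc v unfolding hat_conv_def
      by (auto elim: eventually_mono)
    moreover have "((\<lambda>n. vmark (Gs n) v) \<longlongrightarrow> vmark G v) (inf sequentially (principal {n. v \<in> verts (Gs n)}))"
      using hc v unfolding hat_conv_def by blast
    ultimately show "(\<lambda>n. vmark (root_comp (Gs n)) (id v)) \<longlonglongrightarrow> vmark (root_comp G) v"
      using tendsto_inf_principal_seq by fastforce
  qed
  have em: "\<forall>u\<in>ballV (root_comp G) m. \<forall>v\<in>ballV (root_comp G) m. (u, v) \<in> edges (root_comp G) \<longrightarrow>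
            (\<lambda>n. emark (root_comp (Gs n)) (id u, id v)) \<longlonglongrightarrow> emark (root_comp G) (u, v)"
  proof (intro ballI impI)
    fix u v assume "(u, v) \<in> edges (root_comp G)"
    then have e: "(u, v) \<in> edges G" by (simp add: root_comp_def)
    have "eventually (\<lambda>n. n \<in> {n. (u, v) \<in> edges (Gs n)}) sequentially"
      using set_convD[of "\<lambda>n. edges (Gs n)" "edges G" "(u, v)"] hc e unfolding hat_conv_def
      by (auto elim: eventually_mono)
    moreover have "((\<lambda>n. emark (Gs n) (u, v)) \<longlongrightarrow> emark G (u, v)) (inf sequentially (principal {n. (u, v) \<in> edges (Gs n)}))"
      using hc e unfolding hat_conv_def by blast
    ultimately show "(\<lambda>n. emark (root_comp (Gs n)) (id u, id v)) \<longlonglongrightarrow> emark (root_comp G) (u, v)"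
      using tendsto_inf_principal_seq by fastforce
  qed
  show "\<exists>N \<phi>. (\<forall>n>N. ball_iso m (\<phi> n) (root_comp G) (root_comp (Gs n))) \<and>
          (\<forall>v\<in>ballV (root_comp G) m. (\<lambda>n. vmark (root_comp (Gs n)) (\<phi> n v)) \<longlonglongrightarrow> vmark (root_comp G) v) \<and>
          (\<forall>u\<in>ballV (root_comp G) m. \<forall>v\<in>ballV (root_comp G) m. (u, v) \<in> edges (root_comp G) \<longrightarrow>
            (\<lambda>n. emark (root_comp (Gs n)) (\<phi> n u, \<phi> n v)) \<longlonglongrightarrow> emark (root_comp G) (u, v))"
    using iso vm em by (intro exI[of _ N] exI[of _ "\<lambda>n. id"]) simp
qed

lemma iso_ballV:
  assumes bij: "bij_betw \<phi> (verts G) (verts H)" and r: "\<phi> (root G) = root H"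
    and e: "\<forall>u\<in>verts G. \<forall>v\<in>verts G. (u, v) \<in> edges G \<longleftrightarrow> (\<phi> u, \<phi> v) \<in> edges H"
    and wG: "wf_graph G" and wH: "wf_graph H"
  shows "\<phi> ` ballV G m = ballV H m"
proof (induction m)
  case 0 then show ?case using r by simp
next
  case (Suc m)
  have EG: "edges G \<subseteq> verts G \<times> verts G" and EH: "edges H \<subseteq> verts H \<times> verts H"
    using wG wH unfolding wf_graph_def by auto
  have BG: "ballV G m \<subseteq> verts G" using ballV_sub_verts[OF wG] .
  have "\<phi> ` {v. \<exists>u \<in> ballV G m. (u, v) \<in> edges G} = {v. \<exists>u \<in> ballV H m. (u, v) \<in> edges H}"
  proof (intro equalityI subsetI)
    fix x assume "x \<in> \<phi> ` {v. \<exists>u \<in> ballV G m. (u, v) \<in> edges G}"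
    then obtain u v where uv: "x = \<phi> v" "u \<in> ballV G m" "(u, v) \<in> edges G" by blast
    then have "(\<phi> u, \<phi> v) \<in> edges H" using e EG by blast
    moreover have "\<phi> u \<in> ballV H m" using Suc uv by blast
    ultimately show "x \<in> {v. \<exists>u \<in> ballV H m. (u, v) \<in> edges H}" using uv by blast
  next
    fix x assume "x \<in> {v. \<exists>u \<in> ballV H m. (u, v) \<in> edges H}"
    then obtain u' where u': "u' \<in> ballV H m" "(u', x) \<in> edges H" by blast
    then obtain u where u: "u \<in> ballV G m" "u' = \<phi> u" using Suc by blast
    have "x \<in> verts H" using u' EH by blast
    then obtain v where v: "v \<in> verts G" "x = \<phi> v" using bij by (auto simp: bij_betw_def)
    have "(u, v) \<in> edges G" using e u u' v BG by blast
    then show "x \<in> \<phi> ` {v. \<exists>u \<in> ballV G m. (u, v) \<in> edges G}" using u v by blast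
  qed
  then show ?case using Suc by (simp add: image_Un)
qed

lemma iso_connected:
  assumes bij: "bij_betw \<phi> (verts G) (verts H)" and r: "\<phi> (root G) = root H"
    and e: "\<forall>u\<in>verts G. \<forall>v\<in>verts G. (u, v) \<in> edges G \<longleftrightarrow> (\<phi> u, \<phi> v) \<in> edges H"
    and wG: "wf_graph G" and wH: "wf_graph H" and c: "connected_graph G"
  shows "connected_graph H"
proof -
  have "verts H = \<phi> ` verts G" using bij by (auto simp: bij_betw_def)
  also have "\<dots> = \<phi> ` compV G" using c by (simp add: connected_graph_def)
  also have "\<dots> = compV H" unfolding compV_def using iso_ballV[OF assms(1-5)] by (simp add: image_UN)
  finally show ?thesis by (simp add: connected_graph_def)
qed

lemma ball_iso_sub:
  assumes bi: "ball_iso m \<phi> G H" and k: "k \<le> m"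
  shows "\<phi> ` ballV G k = ballV H k"
  using k
proof (induction k)
  case 0 then show ?case using bi by (simp add: ball_iso_def)
next
  case (Suc k)
  then have km: "k \<le> m" by simp
  note IH = Suc.IH[OF km]
  have bij: "bij_betw \<phi> (ballV G m) (ballV H m)" and r: "\<phi> (root G) = root H"
    and e: "\<forall>u \<in> ballV G m. \<forall>v \<in> ballV G m. (u, v) \<in> edges G \<longleftrightarrow> (\<phi> u, \<phi> v) \<in> edges H"
    using bi unfolding ball_iso_def by auto
  have s1: "ballV G (Suc k) \<subseteq> ballV G m" "ballV H (Suc k) \<subseteq> ballV H m"
    "ballV G k \<subseteq> ballV G m" "ballV H k \<subseteq> ballV H m"
    using ballV_mono[OF Suc.prems, of G] ballV_mono[OF Suc.prems, of H] ballV_mono[OF km, of G] ballV_mono[OF km, of H]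
    by blast+
  have "\<phi> ` {v. \<exists>u \<in> ballV G k. (u, v) \<in> edges G} = {v. \<exists>u \<in> ballV H k. (u, v) \<in> edges H}"
  proof (intro equalityI subsetI)
    fix x assume "x \<in> \<phi> ` {v. \<exists>u \<in> ballV G k. (u, v) \<in> edges G}"
    then obtain u v where uv: "x = \<phi> v" "u \<in> ballV G k" "(u, v) \<in> edges G" by blast
    then have "v \<in> ballV G (Suc k)" by auto
    then have "(\<phi> u, \<phi> v) \<in> edges H" using e uv s1 by blast
    moreover have "\<phi> u \<in> ballV H k" using IH uv by blast
    ultimately show "x \<in> {v. \<exists>u \<in> ballV H k. (u, v) \<in> edges H}" using uv by blast
  next
    fix x assume "x \<in> {v. \<exists>u \<in> ballV H k. (u, v) \<in> edges H}"
    then obtain u' where u': "u' \<in> ballV H k" "(u', x) \<in> edges H" by blast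
    then obtain u where u: "u \<in> ballV G k" "u' = \<phi> u" using IH by blast
    have "x \<in> ballV H (Suc k)" using u' by auto
    then have "x \<in> ballV H m" using s1 by blast
    then obtain v where v: "v \<in> ballV G m" "x = \<phi> v" using bij by (auto simp: bij_betw_def)
    have "(u, v) \<in> edges G" using e u u' v s1 by blast
    then show "x \<in> \<phi> ` {v. \<exists>u \<in> ballV G k. (u, v) \<in> edges G}" using u v by blast
  qed
  then show ?case using IH by (simp add: image_Un)
qed

definition relabel :: "(nat \<Rightarrow> nat) \<Rightarrow> ('e, 'v) mgraph \<Rightarrow> ('e, 'v) mgraph" where
  "relabel \<rho> H = \<lparr>verts = \<rho> ` verts H, edges = (\<lambda>(u, v). (\<rho> u, \<rho> v)) ` edges H,
     root = \<rho> (root H),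
     emark = (\<lambda>(a, b). emark H (inv_into (verts H) \<rho> a, inv_into (verts H) \<rho> b)),
     vmark = (\<lambda>a. vmark H (inv_into (verts H) \<rho> a))\<rparr>"

lemma relabel_simps:
  "verts (relabel \<rho> H) = \<rho> ` verts H" "root (relabel \<rho> H) = \<rho> (root H)"
  "edges (relabel \<rho> H) = (\<lambda>(u, v). (\<rho> u, \<rho> v)) ` edges H"
  "vmark (relabel \<rho> H) a = vmark H (inv_into (verts H) \<rho> a)"
  "emark (relabel \<rho> H) (a, b) = emark H (inv_into (verts H) \<rho> a, inv_into (verts H) \<rho> b)"
  by (simp_all add: relabel_def)

lemma relabel_edge:
  assumes w: "wf_graph H" and inj: "inj_on \<rho> (verts H)" and u: "u \<in> verts H" and v: "v \<in> verts H"
  shows "(\<rho> u, \<rho> v) \<in> edges (relabel \<rho> H) \<longleftrightarrow> (u, v) \<in> edges H"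
proof
  assume "(\<rho> u, \<rho> v) \<in> edges (relabel \<rho> H)"
  then obtain u' v' where "(u', v') \<in> edges H" "\<rho> u' = \<rho> u" "\<rho> v' = \<rho> v"
    by (auto simp: relabel_simps)
  moreover then have "u' \<in> verts H" "v' \<in> verts H" using w unfolding wf_graph_def by auto
  ultimately show "(u, v) \<in> edges H" using inj u v unfolding inj_on_def by metis
qed (auto simp: relabel_simps)

lemma relabel_edge_verts:
  assumes w: "wf_graph H" and "(a, b) \<in> edges (relabel \<rho> H)"
  shows "\<exists>u v. u \<in> verts H \<and> v \<in> verts H \<and> a = \<rho> u \<and> b = \<rho> v \<and> (u, v) \<in> edges H"
  using assms unfolding wf_graph_def by (auto simp: relabel_simps)

lemma relabel_wf:
  assumes w: "wf_graph H" and inj: "inj_on \<rho> (verts H)"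
  shows "wf_graph (relabel \<rho> H)"
proof -
  let ?R = "relabel \<rho> H"
  have EH: "edges H \<subseteq> verts H \<times> verts H" using w unfolding wf_graph_def by auto
  have 1: "root ?R \<in> verts ?R" using w by (simp add: relabel_simps wf_graph_def)
  have 2: "edges ?R \<subseteq> verts ?R \<times> verts ?R" using EH by (auto simp: relabel_simps)
  have 3: "\<forall>a b. (a, b) \<in> edges ?R \<longrightarrow> (b, a) \<in> edges ?R"
    using w unfolding wf_graph_def by (auto simp: relabel_simps)
  have 4: "\<forall>a. (a, a) \<notin> edges ?R"
  proof (intro allI notI)
    fix a assume "(a, a) \<in> edges ?R"
    then obtain u v where "u \<in> verts H" "v \<in> verts H" "a = \<rho> u" "a = \<rho> v" "(u, v) \<in> edges H"
      using relabel_edge_verts[OF w] by blast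
    then show False using inj w unfolding inj_on_def wf_graph_def by metis
  qed
  have 5: "\<forall>a\<in>verts ?R. finite {b. (a, b) \<in> edges ?R}"
  proof
    fix a assume "a \<in> verts ?R"
    then obtain u where u: "u \<in> verts H" "a = \<rho> u" by (auto simp: relabel_simps)
    have "{b. (a, b) \<in> edges ?R} \<subseteq> \<rho> ` {v. (u, v) \<in> edges H}"
    proof
      fix b assume "b \<in> {b. (a, b) \<in> edges ?R}"
      then obtain u' v where "u' \<in> verts H" "v \<in> verts H" "a = \<rho> u'" "b = \<rho> v" "(u', v) \<in> edges H"
        using relabel_edge_verts[OF w] by blast
      moreover then have "u' = u" using inj u unfolding inj_on_def by metis
      ultimately show "b \<in> \<rho> ` {v. (u, v) \<in> edges H}" by blast
    qed
    moreover have "finite {v. (u, v) \<in> edges H}" using w u unfolding wf_graph_def by blast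
    ultimately show "finite {b. (a, b) \<in> edges ?R}" by (meson finite_imageI finite_subset)
  qed
  have 6: "\<forall>a b. (a, b) \<in> edges ?R \<longrightarrow> emark ?R (a, b) = emark ?R (b, a)"
  proof (intro allI impI)
    fix a b assume "(a, b) \<in> edges ?R"
    then obtain u v where "u \<in> verts H" "v \<in> verts H" "a = \<rho> u" "b = \<rho> v" "(u, v) \<in> edges H"
      using relabel_edge_verts[OF w] by blast
    then show "emark ?R (a, b) = emark ?R (b, a)"
      using w inj by (simp add: relabel_simps inv_into_f_f wf_graph_def)
  qed
  show ?thesis using 1 2 3 4 5 6 unfolding wf_graph_def by blast
qed

lemma relabel_iso:
  assumes w: "wf_graph H" and inj: "inj_on \<rho> (verts H)"
  shows "mg_iso (relabel \<rho> H) H"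
  unfolding mg_iso_def
proof (intro exI[of _ "inv_into (verts H) \<rho>"] conjI ballI allI impI)
  show "bij_betw (inv_into (verts H) \<rho>) (verts (relabel \<rho> H)) (verts H)"
    using inj by (simp add: relabel_simps bij_betw_inv_into inj_on_imp_bij_betw)
  show "inv_into (verts H) \<rho> (root (relabel \<rho> H)) = root H"
    using w inj by (simp add: relabel_simps inv_into_f_f wf_graph_def)
  fix a assume a: "a \<in> verts (relabel \<rho> H)"
  then show "vmark H (inv_into (verts H) \<rho> a) = vmark (relabel \<rho> H) a" by (simp add: relabel_simps)
  fix b assume b: "b \<in> verts (relabel \<rho> H)"
  from a b obtain u v where uv: "u \<in> verts H" "v \<in> verts H" "a = \<rho> u" "b = \<rho> v" by (auto simp: relabel_simps)
  show "(a, b) \<in> edges (relabel \<rho> H) \<longleftrightarrow> (inv_into (verts H) \<rho> a, inv_into (verts H) \<rho> b) \<in> edges H"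
    using relabel_edge[OF w inj uv(1,2)] uv inj by (simp add: inv_into_f_f)
next
  fix a b
  show "emark H (inv_into (verts H) \<rho> a, inv_into (verts H) \<rho> b) = emark (relabel \<rho> H) (a, b)"
    by (simp add: relabel_simps)
qed

lemma relabel_connected:
  assumes w: "wf_graph H" and inj: "inj_on \<rho> (verts H)" and c: "connected_graph H"
  shows "connected_graph (relabel \<rho> H)"
proof (rule iso_connected[OF _ _ _ w relabel_wf[OF w inj] c])
  show "bij_betw \<rho> (verts H) (verts (relabel \<rho> H))" using inj by (simp add: relabel_simps inj_on_imp_bij_betw)
  show "\<rho> (root H) = root (relabel \<rho> H)" by (simp add: relabel_simps)
  show "\<forall>u\<in>verts H. \<forall>v\<in>verts H. ((u, v) \<in> edges H) = ((\<rho> u, \<rho> v) \<in> edges (relabel \<rho> H))"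
    using relabel_edge[OF w inj] by blast
qed

lemma local_conv_iso:
  fixes Hs :: "nat \<Rightarrow> ('e::topological_space, 'v::topological_space) mgraph"
  assumes lc: "local_conv Hs H0" and iso: "mg_iso G H0" and wG: "wf_graph G" and wH: "wf_graph H0"
  shows "local_conv Hs G"
proof -
  obtain \<psi> where bij: "bij_betw \<psi> (verts G) (verts H0)" and r: "\<psi> (root G) = root H0"
    and e: "\<forall>u \<in> verts G. \<forall>v \<in> verts G. (u, v) \<in> edges G \<longleftrightarrow> (\<psi> u, \<psi> v) \<in> edges H0"
    and vm: "\<forall>v \<in> verts G. vmark H0 (\<psi> v) = vmark G v"
    and em: "\<forall>u v. (u, v) \<in> edges G \<longrightarrow> emark H0 (\<psi> u, \<psi> v) = emark G (u, v)"
    using iso unfolding mg_iso_def by blast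
  show ?thesis unfolding local_conv_def
  proof
    fix m
    have img: "\<psi> ` ballV G m = ballV H0 m" by (rule iso_ballV[OF bij r e wG wH])
    have BG: "ballV G m \<subseteq> verts G" by (rule ballV_sub_verts[OF wG])
    have bijm: "bij_betw \<psi> (ballV G m) (ballV H0 m)"
      using img BG bij unfolding bij_betw_def by (meson inj_on_subset)
    from lc obtain N \<Phi> where N: "\<forall>n>N. ball_iso m (\<Phi> n) H0 (Hs n)"
      and V: "\<forall>v\<in>ballV H0 m. (\<lambda>n. vmark (Hs n) (\<Phi> n v)) \<longlonglongrightarrow> vmark H0 v"
      and E: "\<forall>u\<in>ballV H0 m. \<forall>v\<in>ballV H0 m. (u, v) \<in> edges H0 \<longrightarrow>
            (\<lambda>n. emark (Hs n) (\<Phi> n u, \<Phi> n v)) \<longlonglongrightarrow> emark H0 (u, v)"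
      unfolding local_conv_def by blast
    have 1: "\<forall>n>N. ball_iso m (\<Phi> n \<circ> \<psi>) G (Hs n)"
    proof (intro allI impI)
      fix n assume "n > N"
      then have b: "ball_iso m (\<Phi> n) H0 (Hs n)" using N by blast
      show "ball_iso m (\<Phi> n \<circ> \<psi>) G (Hs n)" unfolding ball_iso_def
      proof (intro conjI ballI)
        show "bij_betw (\<Phi> n \<circ> \<psi>) (ballV G m) (ballV (Hs n) m)"
          using bijm b unfolding ball_iso_def by (blast intro: bij_betw_trans)
        show "(\<Phi> n \<circ> \<psi>) (root G) = root (Hs n)" using r b unfolding ball_iso_def by simp
        fix u v assume uv: "u \<in> ballV G m" "v \<in> ballV G m"
        then have p: "\<psi> u \<in> ballV H0 m" "\<psi> v \<in> ballV H0 m" using img by auto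
        have "(u, v) \<in> edges G \<longleftrightarrow> (\<psi> u, \<psi> v) \<in> edges H0" using e uv BG by blast
        moreover have "(\<psi> u, \<psi> v) \<in> edges H0 \<longleftrightarrow> (\<Phi> n (\<psi> u), \<Phi> n (\<psi> v)) \<in> edges (Hs n)"
          using b p unfolding ball_iso_def by blast
        ultimately show "(u, v) \<in> edges G \<longleftrightarrow> ((\<Phi> n \<circ> \<psi>) u, (\<Phi> n \<circ> \<psi>) v) \<in> edges (Hs n)"
          by simp
      qed
    qed
    have 2: "\<forall>v\<in>ballV G m. (\<lambda>n. vmark (Hs n) ((\<Phi> n \<circ> \<psi>) v)) \<longlonglongrightarrow> vmark G v"
    proof
      fix v assume v: "v \<in> ballV G m"
      then have "\<psi> v \<in> ballV H0 m" using img by auto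
      then have "(\<lambda>n. vmark (Hs n) (\<Phi> n (\<psi> v))) \<longlonglongrightarrow> vmark H0 (\<psi> v)" using V by blast
      moreover have "vmark H0 (\<psi> v) = vmark G v" using vm v BG by blast
      ultimately show "(\<lambda>n. vmark (Hs n) ((\<Phi> n \<circ> \<psi>) v)) \<longlonglongrightarrow> vmark G v" by simp
    qed
    have 3: "\<forall>u\<in>ballV G m. \<forall>v\<in>ballV G m. (u, v) \<in> edges G \<longrightarrow>
            (\<lambda>n. emark (Hs n) ((\<Phi> n \<circ> \<psi>) u, (\<Phi> n \<circ> \<psi>) v)) \<longlonglongrightarrow> emark G (u, v)"
    proof (intro ballI impI)
      fix u v assume uv: "u \<in> ballV G m" "v \<in> ballV G m" "(u, v) \<in> edges G"
      then have "\<psi> u \<in> ballV H0 m" "\<psi> v \<in> ballV H0 m" "(\<psi> u, \<psi> v) \<in> edges H0"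
        using img e BG by auto
      then show "(\<lambda>n. emark (Hs n) ((\<Phi> n \<circ> \<psi>) u, (\<Phi> n \<circ> \<psi>) v)) \<longlonglongrightarrow> emark G (u, v)"
      proof -
        have "(\<lambda>n. emark (Hs n) (\<Phi> n (\<psi> u), \<Phi> n (\<psi> v))) \<longlonglongrightarrow> emark H0 (\<psi> u, \<psi> v)"
          using E \<open>\<psi> u \<in> ballV H0 m\<close> \<open>\<psi> v \<in> ballV H0 m\<close> \<open>(\<psi> u, \<psi> v) \<in> edges H0\<close> by blast
        moreover have "emark H0 (\<psi> u, \<psi> v) = emark G (u, v)" using em uv by blast
        ultimately show ?thesis by simp
      qed
    qed
    show "\<exists>N \<phi>. (\<forall>n>N. ball_iso m (\<phi> n) G (Hs n)) \<and>
          (\<forall>v\<in>ballV G m. (\<lambda>n. vmark (Hs n) (\<phi> n v)) \<longlonglongrightarrow> vmark G v) \<and>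
          (\<forall>u\<in>ballV G m. \<forall>v\<in>ballV G m. (u, v) \<in> edges G \<longrightarrow>
            (\<lambda>n. emark (Hs n) (\<phi> n u, \<phi> n v)) \<longlonglongrightarrow> emark G (u, v))"
      apply (rule exI[of _ N], rule exI[of _ "\<lambda>n. \<Phi> n \<circ> \<psi>"])
      using 1 2 3 by simp
  qed
qed

definition rho :: "nat \<Rightarrow> nat \<Rightarrow> (nat \<Rightarrow> nat) \<Rightarrow> ('e, 'v) mgraph \<Rightarrow> ('e, 'v) mgraph \<Rightarrow> nat \<Rightarrow> nat" where
  "rho n m \<psi> G Hn = (\<lambda>k. if k \<in> ballV Hn m then inv_into (ballV G m) \<psi> k
      else enumerate {k. n < k \<and> k \<notin> ballV G m} k)"

lemma construct:
  fixes n m :: nat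
  assumes wG: "wf_graph G" and wH: "wf_graph Hn" and bi: "ball_iso m \<psi> G Hn"
  defines "\<rho> \<equiv> rho n m \<psi> G Hn"
  shows "inj_on \<rho> (verts Hn)"
   and "verts (relabel \<rho> Hn) \<subseteq> ballV G m \<union> {k. n < k}"
   and "ballV G m \<subseteq> verts (relabel \<rho> Hn)"
   and "root (relabel \<rho> Hn) = root G"
   and "\<And>k a b. Suc k \<le> m \<Longrightarrow> a \<in> ballV G k \<Longrightarrow> (a, b) \<in> edges (relabel \<rho> Hn) \<longleftrightarrow> (a, b) \<in> edges G"
   and "\<And>v. v \<in> ballV G m \<Longrightarrow> vmark (relabel \<rho> Hn) v = vmark Hn (\<psi> v)"
   and "\<And>a b. a \<in> ballV G m \<Longrightarrow> b \<in> ballV G m \<Longrightarrow> emark (relabel \<rho> Hn) (a, b) = emark Hn (\<psi> a, \<psi> b)"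
proof -
  define BG where "BG = ballV G m"
  define BH where "BH = ballV Hn m"
  define T where "T = {k. n < k \<and> k \<notin> BG}"
  define \<iota> where "\<iota> = inv_into BG \<psi>"
  have rho_eq: "\<rho> = (\<lambda>k. if k \<in> BH then \<iota> k else enumerate T k)"
    unfolding \<rho>_def rho_def BH_def \<iota>_def T_def BG_def by simp
  have bij: "bij_betw \<psi> BG BH" using bi unfolding ball_iso_def BG_def BH_def by blast
  have bij\<iota>: "bij_betw \<iota> BH BG" unfolding \<iota>_def using bij by (rule bij_betw_inv_into)
  have \<iota>\<psi>: "\<And>v. v \<in> BG \<Longrightarrow> \<iota> (\<psi> v) = v" unfolding \<iota>_def using bij
    by (simp add: bij_betw_def inv_into_f_f)
  have \<psi>BH: "\<And>v. v \<in> BG \<Longrightarrow> \<psi> v \<in> BH" using bij by (auto simp: bij_betw_def)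
  have fin: "finite BG" unfolding BG_def by (rule ballV_finite[OF wG])
  have "T = {n<..} - BG" unfolding T_def by auto
  then have infT: "infinite T" using fin infinite_Ioi[of n] by (simp add: Diff_infinite_finite)
  have enT: "\<And>k. enumerate T k \<in> T" using infT by (rule enumerate_in_set)
  have injT: "inj (enumerate T)" using infT by (rule inj_enumerate)
  have BHV: "BH \<subseteq> verts Hn" unfolding BH_def by (rule ballV_sub_verts[OF wH])
  have TBG: "\<And>x. x \<in> T \<Longrightarrow> x \<notin> BG" unfolding T_def by simp
  show inj: "inj_on \<rho> (verts Hn)"
  proof (rule inj_onI)
    fix x y assume xy: "x \<in> verts Hn" "y \<in> verts Hn" "\<rho> x = \<rho> y"
    show "x = y"
    proof (cases "x \<in> BH"; cases "y \<in> BH")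
      assume h: "x \<in> BH" "y \<in> BH"
      then have "\<iota> x = \<iota> y" using xy(3) unfolding rho_eq by simp
      then show ?thesis using h bij\<iota> unfolding bij_betw_def by (meson inj_onD)
    next
      assume h: "x \<in> BH" "y \<notin> BH"
      then have "\<rho> x \<in> BG" "\<rho> y \<in> T" using bij\<iota> enT unfolding rho_eq bij_betw_def by auto
      then have False using TBG[of "\<rho> y"] xy(3) by simp
      then show ?thesis ..
    next
      assume h: "x \<notin> BH" "y \<in> BH"
      then have "\<rho> y \<in> BG" "\<rho> x \<in> T" using bij\<iota> enT unfolding rho_eq bij_betw_def by auto
      then have False using TBG[of "\<rho> x"] xy(3) by simp
      then show ?thesis ..
    next
      assume h: "x \<notin> BH" "y \<notin> BH"
      then have "enumerate T x = enumerate T y" using xy(3) unfolding rho_eq by simp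
      then show ?thesis using injT by (meson injD)
    qed
  qed
  have \<psi>\<iota>: "\<And>x. x \<in> BH \<Longrightarrow> \<psi> (\<iota> x) = x" unfolding \<iota>_def using bij
    by (simp add: bij_betw_def f_inv_into_f)
  have \<iota>BG: "\<And>x. x \<in> BH \<Longrightarrow> \<iota> x \<in> BG" using bij\<iota> by (auto simp: bij_betw_def)
  have \<rho>\<psi>: "\<And>v. v \<in> BG \<Longrightarrow> \<rho> (\<psi> v) = v" using \<iota>\<psi> \<psi>BH unfolding rho_eq by simp
  have inv\<rho>: "\<And>v. v \<in> BG \<Longrightarrow> inv_into (verts Hn) \<rho> v = \<psi> v"
  proof -
    fix v assume v: "v \<in> BG"
    have "inv_into (verts Hn) \<rho> (\<rho> (\<psi> v)) = \<psi> v" using inj \<psi>BH[OF v] BHV by (intro inv_into_f_f) auto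
    then show "inv_into (verts Hn) \<rho> v = \<psi> v" using \<rho>\<psi>[OF v] by simp
  qed
  have \<rho>img: "\<And>x. \<rho> x \<in> BG \<union> T"
    using bij\<iota> enT unfolding rho_eq bij_betw_def by auto
  show "verts (relabel \<rho> Hn) \<subseteq> ballV G m \<union> {k. n < k}"
    using \<rho>img unfolding relabel_simps BG_def[symmetric] T_def by auto
  show "ballV G m \<subseteq> verts (relabel \<rho> Hn)"
  proof
    fix v assume "v \<in> ballV G m"
    then have "v \<in> BG" by (simp add: BG_def)
    then show "v \<in> verts (relabel \<rho> Hn)" using \<rho>\<psi> \<psi>BH BHV unfolding relabel_simps by (metis image_eqI subsetD)
  qed
  have rG: "root G \<in> BG" unfolding BG_def using ballV_mono[of 0 m G] by auto
  have r: "\<psi> (root G) = root Hn" using bi unfolding ball_iso_def by blast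
  show "root (relabel \<rho> Hn) = root G" using \<rho>\<psi>[OF rG] r by (simp add: relabel_simps)
  show "\<And>v. v \<in> ballV G m \<Longrightarrow> vmark (relabel \<rho> Hn) v = vmark Hn (\<psi> v)"
    using inv\<rho> by (simp add: relabel_simps BG_def)
  show "\<And>a b. a \<in> ballV G m \<Longrightarrow> b \<in> ballV G m \<Longrightarrow> emark (relabel \<rho> Hn) (a, b) = emark Hn (\<psi> a, \<psi> b)"
    using inv\<rho> by (simp add: relabel_simps BG_def)
  have eb: "\<And>u v. u \<in> BG \<Longrightarrow> v \<in> BG \<Longrightarrow> (u, v) \<in> edges G \<longleftrightarrow> (\<psi> u, \<psi> v) \<in> edges Hn"
    using bi unfolding ball_iso_def BG_def by blast
  fix k a b assume km: "Suc k \<le> m" and a: "a \<in> ballV G k"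
  have kBG: "ballV G (Suc k) \<subseteq> BG" unfolding BG_def using ballV_mono[OF km] .
  have kBH: "ballV Hn (Suc k) \<subseteq> BH" unfolding BH_def using ballV_mono[OF km] .
  have aBG: "a \<in> BG" using a kBG by auto
  have \<psi>k: "\<psi> ` ballV G k = ballV Hn k" using ball_iso_sub[OF bi] km by simp
  show "(a, b) \<in> edges (relabel \<rho> Hn) \<longleftrightarrow> (a, b) \<in> edges G"
  proof
    assume "(a, b) \<in> edges (relabel \<rho> Hn)"
    then obtain x y where xy: "x \<in> verts Hn" "y \<in> verts Hn" "a = \<rho> x" "b = \<rho> y" "(x, y) \<in> edges Hn"
      using relabel_edge_verts[OF wH] by blast
    have "x \<in> BH"
    proof (rule ccontr)
      assume "x \<notin> BH"
      then have "\<rho> x \<in> T" using enT unfolding rho_eq by simp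
      then show False using xy(3) aBG TBG by simp
    qed
    then have "\<iota> x = a" using xy(3) unfolding rho_eq by simp
    then have "x = \<psi> a" using \<psi>\<iota> \<open>x \<in> BH\<close> by metis
    then have "x \<in> ballV Hn k" using \<psi>k a by blast
    then have "y \<in> ballV Hn (Suc k)" using xy(5) by auto
    then have yBH: "y \<in> BH" using kBH by blast
    then have "\<iota> y = b" using xy(4) unfolding rho_eq by simp
    then have bBG: "b \<in> BG" and "y = \<psi> b" using \<psi>\<iota> \<iota>BG yBH by metis+
    have "(\<psi> a, \<psi> b) \<in> edges Hn" using xy(5) \<open>x = \<psi> a\<close> \<open>y = \<psi> b\<close> by simp
    then show "(a, b) \<in> edges G" using eb[OF aBG bBG] by simp
  next
    assume ab: "(a, b) \<in> edges G"
    then have "b \<in> ballV G (Suc k)" using a by auto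
    then have bBG: "b \<in> BG" using kBG by blast
    have "(\<psi> a, \<psi> b) \<in> edges Hn" using eb[OF aBG bBG] ab by simp
    moreover have "\<psi> a \<in> verts Hn" "\<psi> b \<in> verts Hn" using \<psi>BH aBG bBG BHV by auto
    ultimately have "(\<rho> (\<psi> a), \<rho> (\<psi> b)) \<in> edges (relabel \<rho> Hn)" using relabel_edge[OF wH inj] by blast
    then show "(a, b) \<in> edges (relabel \<rho> Hn)" using \<rho>\<psi> aBG bBG by simp
  qed
qed

lemma inv_Suc_mono: "(M::nat) \<le> m \<Longrightarrow> inverse (real (Suc m)) \<le> inverse (real (Suc M))"
  by (rule le_imp_inverse_le) auto

lemma part2:
  fixes Hs :: "nat \<Rightarrow> ('e::polish_space, 'v::polish_space) mgraph"
  assumes wHs: "\<forall>n. wf_graph (Hs n)" and wH: "wf_graph H"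
    and lc0: "local_conv (\<lambda>n. root_comp (Hs n)) (root_comp H)"
    and wG: "wf_graph G" and cG: "connected_graph G" and iso: "mg_iso G (root_comp H)"
  shows "\<exists>Gs. (\<forall>n. wf_graph (Gs n) \<and> connected_graph (Gs n) \<and> mg_iso (Gs n) (root_comp (Hs n)))
             \<and> hat_conv Gs G"
proof -
  define Hn where "Hn = (\<lambda>n. root_comp (Hs n))"
  have wHn: "\<And>n. wf_graph (Hn n)" unfolding Hn_def using wHs wf_root_comp by blast
  have cHn: "\<And>n. connected_graph (Hn n)" unfolding Hn_def by (rule connected_root_comp)
  have lc: "local_conv Hn G"
    using local_conv_iso[OF lc0[folded Hn_def] iso wG wf_root_comp[OF wH]] .
  have "\<forall>m. \<exists>N \<phi>. (\<forall>n>N. ball_iso m (\<phi> n) G (Hn n)) \<and>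
        (\<forall>v \<in> ballV G m. (\<lambda>n. vmark (Hn n) (\<phi> n v)) \<longlonglongrightarrow> vmark G v) \<and>
        (\<forall>u \<in> ballV G m. \<forall>v \<in> ballV G m. (u, v) \<in> edges G \<longrightarrow>
            (\<lambda>n. emark (Hn n) (\<phi> n u, \<phi> n v)) \<longlonglongrightarrow> emark G (u, v))"
    using lc unfolding local_conv_def .
  then obtain N \<Phi> where NP: "\<And>m. (\<forall>n>N m. ball_iso m (\<Phi> m n) G (Hn n)) \<and>
        (\<forall>v \<in> ballV G m. (\<lambda>n. vmark (Hn n) (\<Phi> m n v)) \<longlonglongrightarrow> vmark G v) \<and>
        (\<forall>u \<in> ballV G m. \<forall>v \<in> ballV G m. (u, v) \<in> edges G \<longrightarrow>
            (\<lambda>n. emark (Hn n) (\<Phi> m n u, \<Phi> m n v)) \<longlonglongrightarrow> emark G (u, v))"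
    by (auto simp only: choice_iff)
  define A where "A = (\<lambda>m n. ball_iso m (\<Phi> m n) G (Hn n) \<and>
     (\<forall>v \<in> ballV G m. dist (vmark (Hn n) (\<Phi> m n v)) (vmark G v) < inverse (real (Suc m))) \<and>
     (\<forall>u \<in> ballV G m. \<forall>v \<in> ballV G m. (u, v) \<in> edges G \<longrightarrow>
        dist (emark (Hn n) (\<Phi> m n u, \<Phi> m n v)) (emark G (u, v)) < inverse (real (Suc m))))"
  have evA: "\<And>m. eventually (A m) sequentially"
  proof -
    fix m
    have pos: "inverse (real (Suc m)) > 0" by simp
    have e1: "eventually (\<lambda>n. ball_iso m (\<Phi> m n) G (Hn n)) sequentially"
      using eventually_gt_at_top[of "N m"] by (rule eventually_mono) (use NP[of m] in blast)
    have e2: "eventually (\<lambda>n. \<forall>v \<in> ballV G m. dist (vmark (Hn n) (\<Phi> m n v)) (vmark G v) < inverse (real (Suc m))) sequentially"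
    proof (rule eventually_ball_finite[OF ballV_finite[OF wG]], rule ballI)
      fix v assume "v \<in> ballV G m"
      then have "(\<lambda>n. vmark (Hn n) (\<Phi> m n v)) \<longlonglongrightarrow> vmark G v" using NP[of m] by blast
      then show "eventually (\<lambda>n. dist (vmark (Hn n) (\<Phi> m n v)) (vmark G v) < inverse (real (Suc m))) sequentially"
        using pos by (rule tendstoD)
    qed
    have e3: "eventually (\<lambda>n. \<forall>u \<in> ballV G m. \<forall>v \<in> ballV G m. (u, v) \<in> edges G \<longrightarrow>
        dist (emark (Hn n) (\<Phi> m n u, \<Phi> m n v)) (emark G (u, v)) < inverse (real (Suc m))) sequentially"
    proof (rule eventually_ball_finite[OF ballV_finite[OF wG]], rule ballI,
           rule eventually_ball_finite[OF ballV_finite[OF wG]], rule ballI)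
      fix u v assume uv: "u \<in> ballV G m" "v \<in> ballV G m"
      show "eventually (\<lambda>n. (u, v) \<in> edges G \<longrightarrow>
        dist (emark (Hn n) (\<Phi> m n u, \<Phi> m n v)) (emark G (u, v)) < inverse (real (Suc m))) sequentially"
      proof (cases "(u, v) \<in> edges G")
        case True
        then have "(\<lambda>n. emark (Hn n) (\<Phi> m n u, \<Phi> m n v)) \<longlonglongrightarrow> emark G (u, v)" using NP[of m] uv by blast
        then have "eventually (\<lambda>n. dist (emark (Hn n) (\<Phi> m n u, \<Phi> m n v)) (emark G (u, v)) < inverse (real (Suc m))) sequentially"
          using pos by (rule tendstoD)
        then show ?thesis by (auto elim: eventually_mono)
      qed simp
    qed
    show "eventually (A m) sequentially" using e1 e2 e3 unfolding A_def by eventually_elim blast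
  qed
  have "\<forall>m. \<exists>K. \<forall>n\<ge>K. A m n" using evA unfolding eventually_sequentially by blast
  then obtain K0 where K0: "\<And>m n. n \<ge> K0 m \<Longrightarrow> A m n" by (auto simp only: choice_iff)
  define K where "K = (\<lambda>m. (\<Sum>j\<le>m. K0 j) + m)"
  have K0K: "K0 m \<le> K m" for m unfolding K_def by (simp add: trans_le_add1 member_le_sum)
  have KSuc: "K m < K (Suc m)" for m unfolding K_def by simp
  have Kmono: "strict_mono K" using KSuc by (rule strict_monoI_Suc)
  have mK: "m \<le> K m" for m unfolding K_def by simp
  define mn where "mn = (\<lambda>n. Max {m. K m \<le> n})"
  have fin_mn: "finite {m. K m \<le> n}" for n
    by (rule finite_subset[of _ "{..n}"]) (use mK in \<open>auto intro: le_trans\<close>)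
  have mn_good: "K (mn n) \<le> n" if "K 0 \<le> n" for n
  proof -
    have "mn n \<in> {m. K m \<le> n}" unfolding mn_def using that fin_mn by (intro Max_in) auto
    then show ?thesis by simp
  qed
  have mn_ge: "M \<le> mn n" if "K M \<le> n" for M n
    unfolding mn_def using that fin_mn by (intro Max_ge) auto
  have A_mn: "A (mn n) n" if "K 0 \<le> n" for n
    using K0[of "mn n" n] K0K[of "mn n"] mn_good[OF that] by simp
  have key: "eventually (\<lambda>n. K 0 \<le> n \<and> M \<le> mn n) sequentially" for M
  proof -
    have "K 0 \<le> K M" using Kmono by (simp add: strict_mono_less_eq)
    then show ?thesis unfolding eventually_sequentially
      using mn_ge by (intro exI[of _ "K M"]) auto
  qed
  define \<rho> where "\<rho> = (\<lambda>n. if K 0 \<le> n then rho n (mn n) (\<Phi> (mn n) n) G (Hn n) else id)"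
  define Gs where "Gs = (\<lambda>n. relabel (\<rho> n) (Hn n))"
  have bi: "ball_iso (mn n) (\<Phi> (mn n) n) G (Hn n)" if "K 0 \<le> n" for n
    using A_mn[OF that] unfolding A_def by blast
  note C = construct[OF wG wHn bi]
  have inj: "inj_on (\<rho> n) (verts (Hn n))" for n
    by (cases "K 0 \<le> n") (simp_all add: \<rho>_def C(1))
  have part_a: "\<forall>n. wf_graph (Gs n) \<and> connected_graph (Gs n) \<and> mg_iso (Gs n) (root_comp (Hs n))"
    unfolding Gs_def using relabel_wf[OF wHn inj] relabel_connected[OF wHn inj cHn] relabel_iso[OF wHn inj]
    by (simp add: Hn_def)
  have G1: "verts (Gs n) \<subseteq> ballV G (mn n) \<union> {k. n < k}" if "K 0 \<le> n" for n
    using C(2)[OF that] that unfolding Gs_def \<rho>_def by simp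
  have G2: "ballV G (mn n) \<subseteq> verts (Gs n)" if "K 0 \<le> n" for n
    using C(3)[OF that] that unfolding Gs_def \<rho>_def by simp
  have G3: "root (Gs n) = root G" if "K 0 \<le> n" for n
    using C(4)[OF that] that unfolding Gs_def \<rho>_def by simp
  have G4: "(a, b) \<in> edges (Gs n) \<longleftrightarrow> (a, b) \<in> edges G" if "K 0 \<le> n" "Suc k \<le> mn n" "a \<in> ballV G k" for n k a b
    using C(5)[OF that(1) that(2,3)] that unfolding Gs_def \<rho>_def by simp
  have G5: "vmark (Gs n) v = vmark (Hn n) (\<Phi> (mn n) n v)" if "K 0 \<le> n" "v \<in> ballV G (mn n)" for n v
    using C(6)[OF that] that unfolding Gs_def \<rho>_def by simp
  have G6: "emark (Gs n) (a, b) = emark (Hn n) (\<Phi> (mn n) n a, \<Phi> (mn n) n b)"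
    if "K 0 \<le> n" "a \<in> ballV G (mn n)" "b \<in> ballV G (mn n)" for n a b
    using C(7)[OF that] that unfolding Gs_def \<rho>_def by simp
  have wGs: "\<And>n. wf_graph (Gs n)" using part_a by blast
  have depth: "\<exists>d. x \<in> ballV G d" if "x \<in> verts G" for x
    using cG that unfolding connected_graph_def compV_def by blast
  have notV: "eventually (\<lambda>n. x \<notin> verts (Gs n)) sequentially" if xV: "x \<notin> verts G" for x
  proof -
    have "eventually (\<lambda>n. K 0 \<le> n \<and> x \<le> n) sequentially"
      using key[of 0] eventually_ge_at_top[of x] by eventually_elim simp
    then show ?thesis
    proof eventually_elim
      case (elim n)
      show ?case
      proof
        assume "x \<in> verts (Gs n)"
        then have "x \<in> ballV G (mn n)" using G1[of n] elim by auto
        then show False using xV ballV_sub_verts[OF wG] by blast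
      qed
    qed
  qed
  have inV: "eventually (\<lambda>n. x \<in> verts (Gs n)) sequentially" if xV: "x \<in> verts G" for x
  proof -
    obtain d where d: "x \<in> ballV G d" using depth[OF xV] by blast
    from key[of d] show ?thesis
    proof eventually_elim
      case (elim n)
      then show ?case using G2[of n] ballV_mono[of d "mn n" G] d by blast
    qed
  qed
  have nbr: "eventually (\<lambda>n. \<forall>b. (a, b) \<in> edges (Gs n) \<longleftrightarrow> (a, b) \<in> edges G) sequentially"
    if aV: "a \<in> verts G" for a
  proof -
    obtain d where d: "a \<in> ballV G d" using depth[OF aV] by blast
    from key[of "Suc d"] show ?thesis
    proof eventually_elim
      case (elim n)
      then show ?case using G4[of n d a] d by blast
    qed
  qed
  have c1: "set_conv (\<lambda>n. verts (Gs n)) (verts G)"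
  proof (rule set_convI)
    fix x show "eventually (\<lambda>n. x \<in> verts (Gs n) \<longleftrightarrow> x \<in> verts G) sequentially"
      by (cases "x \<in> verts G") (auto dest: inV notV elim: eventually_mono)
  qed
  have c2: "set_conv (\<lambda>n. edges (Gs n)) (edges G)"
  proof (rule set_convI)
    fix e :: "nat \<times> nat"
    obtain a b where e: "e = (a, b)" by fastforce
    show "eventually (\<lambda>n. e \<in> edges (Gs n) \<longleftrightarrow> e \<in> edges G) sequentially"
    proof (cases "a \<in> verts G")
      case True
      from nbr[OF True] show ?thesis unfolding e by (auto elim: eventually_mono)
    next
      case False
      then have "(a, b) \<notin> edges G" using wG unfolding wf_graph_def by auto
      moreover have "eventually (\<lambda>n. (a, b) \<notin> edges (Gs n)) sequentially"
        using notV[OF False]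
      proof eventually_elim
        case (elim n)
        then show ?case using wGs[of n] unfolding wf_graph_def by blast
      qed
      ultimately show ?thesis unfolding e by (auto elim: eventually_mono)
    qed
  qed
  have c3: "(\<lambda>n. root (Gs n)) \<longlonglongrightarrow> root G"
    by (rule tendsto_eventually, rule eventually_mono[OF key[of 0]]) (use G3 in blast)
  have c4: "((\<lambda>n. emark (Gs n) e) \<longlongrightarrow> emark G e) (inf sequentially (principal {n. e \<in> edges (Gs n)}))"
    if e: "e \<in> edges G" for e
  proof (rule tendsto_mono[OF inf_le1])
    obtain a b where ab: "e = (a, b)" by fastforce
    have "a \<in> verts G" "b \<in> verts G" using e ab wG unfolding wf_graph_def by auto
    then obtain da db where "a \<in> ballV G da" "b \<in> ballV G db" using depth by blast
    then have abd: "a \<in> ballV G (max da db)" "b \<in> ballV G (max da db)"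
      using ballV_mono[of da "max da db" G] ballV_mono[of db "max da db" G] by auto
    show "(\<lambda>n. emark (Gs n) e) \<longlonglongrightarrow> emark G e"
    proof (rule tendstoI)
      fix \<epsilon> :: real assume "\<epsilon> > 0"
      then obtain M0 where M0: "inverse (real (Suc M0)) < \<epsilon>" using reals_Archimedean by blast
      define M where "M = max M0 (max da db)"
      from key[of M] show "eventually (\<lambda>n. dist (emark (Gs n) e) (emark G e) < \<epsilon>) sequentially"
      proof eventually_elim
        case (elim n)
        then have mM: "M \<le> mn n" by simp
        have inb: "a \<in> ballV G (mn n)" "b \<in> ballV G (mn n)"
          using abd ballV_mono[of "max da db" "mn n" G] mM unfolding M_def by auto
        have "dist (emark (Gs n) e) (emark G e) = dist (emark (Hn n) (\<Phi> (mn n) n a, \<Phi> (mn n) n b)) (emark G (a, b))"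
          using G6[of n a b] elim inb ab by simp
        also have "\<dots> < inverse (real (Suc (mn n)))"
          using A_mn[of n] elim inb e ab unfolding A_def by blast
        also have "\<dots> \<le> inverse (real (Suc M0))"
          using mM unfolding M_def by (intro inv_Suc_mono) simp
        finally show ?case using M0 by simp
      qed
    qed
  qed
  have c5: "((\<lambda>n. vmark (Gs n) v) \<longlongrightarrow> vmark G v) (inf sequentially (principal {n. v \<in> verts (Gs n)}))"
    if v: "v \<in> verts G" for v
  proof (rule tendsto_mono[OF inf_le1])
    obtain d where d: "v \<in> ballV G d" using depth[OF v] by blast
    show "(\<lambda>n. vmark (Gs n) v) \<longlonglongrightarrow> vmark G v"
    proof (rule tendstoI)
      fix \<epsilon> :: real assume "\<epsilon> > 0"
      then obtain M0 where M0: "inverse (real (Suc M0)) < \<epsilon>" using reals_Archimedean by blast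
      define M where "M = max M0 d"
      from key[of M] show "eventually (\<lambda>n. dist (vmark (Gs n) v) (vmark G v) < \<epsilon>) sequentially"
      proof eventually_elim
        case (elim n)
        then have mM: "M \<le> mn n" by simp
        have inb: "v \<in> ballV G (mn n)"
          using d ballV_mono[of d "mn n" G] mM unfolding M_def by auto
        have "dist (vmark (Gs n) v) (vmark G v) = dist (vmark (Hn n) (\<Phi> (mn n) n v)) (vmark G v)"
          using G5[of n v] elim inb by simp
        also have "\<dots> < inverse (real (Suc (mn n)))"
          using A_mn[of n] elim inb unfolding A_def by blast
        also have "\<dots> \<le> inverse (real (Suc M0))"
          using mM unfolding M_def by (intro inv_Suc_mono) simp
        finally show ?case using M0 by simp
      qed
    qed
  qed
  have c6: "((\<lambda>n. Max (cl (Gs n) v)) \<longlongrightarrow> Max (cl G v)) (inf sequentially (principal {n. v \<in> verts (Gs n)}))"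
    if v: "v \<in> verts G" for v
  proof (rule tendsto_mono[OF inf_le1], rule tendsto_eventually)
    from nbr[OF v] show "eventually (\<lambda>n. Max (cl (Gs n) v) = Max (cl G v)) sequentially"
      by eventually_elim (simp add: cl_def)
  qed
  have "hat_conv Gs G" unfolding hat_conv_def using c1 c2 c3 c4 c5 c6 by blast
  with part_a show ?thesis by blast
qed

theorem mainTheorem17:
  shows
  "(\<forall>(Gs :: nat \<Rightarrow> ('e::polish_space, 'v::polish_space) mgraph) G.
      (\<forall>n. wf_graph (Gs n)) \<and> wf_graph G \<and> hat_conv Gs G
        \<longrightarrow> local_conv (\<lambda>n. root_comp (Gs n)) (root_comp G))
   \<and>
   (\<forall>(Hs :: nat \<Rightarrow> ('e, 'v) mgraph) H G.
      (\<forall>n. wf_graph (Hs n)) \<and> wf_graph H \<and>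
      local_conv (\<lambda>n. root_comp (Hs n)) (root_comp H) \<and>
      wf_graph G \<and> connected_graph G \<and> mg_iso G (root_comp H)
        \<longrightarrow> (\<exists>Gs :: nat \<Rightarrow> ('e, 'v) mgraph.
               (\<forall>n. wf_graph (Gs n) \<and> connected_graph (Gs n) \<and> mg_iso (Gs n) (root_comp (Hs n)))
               \<and> hat_conv Gs G))"
proof (intro conjI)
  show "\<forall>(Gs :: nat \<Rightarrow> ('e::polish_space, 'v::polish_space) mgraph) G.
      (\<forall>n. wf_graph (Gs n)) \<and> wf_graph G \<and> hat_conv Gs G
        \<longrightarrow> local_conv (\<lambda>n. root_comp (Gs n)) (root_comp G)"
    using part1 by blast
  show "\<forall>(Hs :: nat \<Rightarrow> ('e, 'v) mgraph) H G.
      (\<forall>n. wf_graph (Hs n)) \<and> wf_graph H \<and>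
      local_conv (\<lambda>n. root_comp (Hs n)) (root_comp H) \<and>
      wf_graph G \<and> connected_graph G \<and> mg_iso G (root_comp H)
        \<longrightarrow> (\<exists>Gs :: nat \<Rightarrow> ('e, 'v) mgraph.
               (\<forall>n. wf_graph (Gs n) \<and> connected_graph (Gs n) \<and> mg_iso (Gs n) (root_comp (Hs n)))
               \<and> hat_conv Gs G)"
    using part2 by blast
qed

end
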